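(* There exist absolute constants $c>0$ and $\alpha_0\in(0,1)$ such that for every $\alpha\in(0,\alpha_0]$ there exist a distribution $\mathcal D$ over $\mathcal X\times\{A,B\}\times\{0,1\}$, a hypothesis class $\mathcal H$ with an optimal Equal-Opportunity-constrained classifier $h^*\in\mathcal H$ on $\mathcal D$ (i.e. $h^*$ minimizes $\Pr_{\mathcal D}[h(x,z)\ne y]$ among $h\in\mathcal H$ satisfying Equal Opportunity on $\mathcal D$), and a malicious adversary of power $\alpha$, i.e. a distribution $\mathcal Q$ yielding $\widetilde{\mathcal D}=(1-\alpha)\mathcal D+\alpha\mathcal Q$, such that every hypothesis $\hat h$ (possibly randomized and not in $\mathcal H$, i.e. returned by an improper learner) satisfying Equal Opportunity on $\widetilde{\mathcal D}$ has $$\Big|\mathbb E_{\mathcal D}[\mathbf 1(\hat h(x,z)\ne y)]-\mathbb E_{\mathcal D}[\mathbf 1(h^*(x,z)\ne y)]\Big|\ge c\sqrt\alpha.$$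
   Context: Examples are triples (features $x$, group $z\in\{A,B\}$, label $y\in\{0,1\}$); hypotheses may depend on the group. Equal Opportunity on a distribution: $\Pr[h(x,z)=1\mid y=1,z=A]=\Pr[h(x,z)=1\mid y=1,z=B]$ (probabilities also over the hypothesis's randomness). *)

theory Defs
  imports "HOL-Probability.Probability"
begin

datatype grp = GA | GB

text \<open>Examples are triples (x, z, y) with features x :: nat, group z, label y :: bool
  (True = label 1).\<close>

type_synonym example = "nat \<times> grp \<times> bool"
type_synonym hyp = "nat \<Rightarrow> grp \<Rightarrow> bool pmf"

definition tpr :: "example pmf \<Rightarrow> hyp \<Rightarrow> grp \<Rightarrow> real" where
  "tpr D h g =
     measure_pmf.expectation D
        (\<lambda>(x, z, y). if z = g \<and> y then measure_pmf.prob (h x z) {True} else 0)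
     / measure_pmf.prob D {(x, z, y). z = g \<and> y}"

definition equal_opportunity :: "example pmf \<Rightarrow> hyp \<Rightarrow> bool" where
  "equal_opportunity D h \<longleftrightarrow> tpr D h GA = tpr D h GB"

definition err :: "example pmf \<Rightarrow> hyp \<Rightarrow> real" where
  "err D h = measure_pmf.expectation D
      (\<lambda>(x, z, y). measure_pmf.prob (h x z) {b. b \<noteq> y})"

definition mix_pmf :: "real \<Rightarrow> 'a pmf \<Rightarrow> 'a pmf \<Rightarrow> 'a pmf" where
  "mix_pmf a D Q = bind_pmf (bernoulli_pmf a) (\<lambda>b. if b then Q else D)"

end

theory Submission
  imports Defs
begin

lemma exp_fin:
  fixes f :: "'a \<Rightarrow> real"
  assumes "finite S" "set_pmf M \<subseteq> S"
  shows "measure_pmf.expectation M f = (\<Sum>a\<in>S. f a * pmf M a)"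
  using assms by (intro integral_measure_pmf_real) auto

lemma prob_fin:
  assumes "finite S" "set_pmf M \<subseteq> S"
  shows "measure_pmf.prob M A = (\<Sum>a\<in>S. of_bool (a \<in> A) * pmf M a)"
proof -
  have "measure_pmf.prob M A = measure_pmf.expectation M (indicator A)" by simp
  also have "\<dots> = (\<Sum>a\<in>S. indicator A a * pmf M a)" by (rule exp_fin[OF assms])
  finally show ?thesis by (simp add: indicator_def)
qed

lemma pmf_mix:
  assumes "0 \<le> a" "a \<le> 1"
  shows "pmf (mix_pmf a D Q) x = (1 - a) * pmf D x + a * pmf Q x"
  unfolding mix_pmf_def pmf_bind
  using assms by (subst integral_measure_pmf_real[where A=UNIV]) (auto simp: UNIV_bool)

lemma prob_notTrue: "measure_pmf.prob p {b. b \<noteq> True} = 1 - measure_pmf.prob p {True}"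
proof -
  have "{b. b \<noteq> True} = space (measure_pmf p) - {True}" by auto
  then show ?thesis using measure_pmf.prob_compl[of "{True}" p] by simp
qed

lemma prob_False: "measure_pmf.prob p {False} = 1 - measure_pmf.prob p {True}"
proof -
  have "{b. b \<noteq> True} = {False}" by auto
  then show ?thesis using prob_notTrue[of p] by simp
qed

lemma prob_notFalse: "measure_pmf.prob p {b. b \<noteq> False} = measure_pmf.prob p {True}"
proof -
  have "{b. b \<noteq> False} = {True}" by auto
  then show ?thesis by simp
qed

theorem mainTheorem8:
  shows "\<exists>c::real. c > 0 \<and> (\<exists>\<alpha>0::real. 0 < \<alpha>0 \<and> \<alpha>0 < 1 \<and>
    (\<forall>\<alpha>::real. 0 < \<alpha> \<and> \<alpha> \<le> \<alpha>0 \<longrightarrow>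
      (\<exists>(D :: example pmf) (H :: hyp set) (hstar :: hyp) (Q :: example pmf).
         (\<forall>g. measure_pmf.prob D {(x, z, y). z = g \<and> y} > 0) \<and>
         hstar \<in> H \<and> equal_opportunity D hstar \<and>
         (\<forall>h\<in>H. equal_opportunity D h \<longrightarrow> err D hstar \<le> err D h) \<and>
         (\<forall>hhat :: hyp. equal_opportunity (mix_pmf \<alpha> D Q) hhat \<longrightarrow>
            \<bar>err D hhat - err D hstar\<bar> \<ge> c * sqrt \<alpha>))))"
proof (intro exI[of _ "1/4"] conjI exI[of _ "1/4"] allI impI; (elim conjE)?)
  fix \<alpha> :: real
  assume a0: "0 < \<alpha>" and a1: "\<alpha> \<le> 1/4"
  define S :: "example set" where "S = {(0,GA,True),(1,GA,False),(0,GB,True),(1,GA,True)}"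
  define xs where "xs = [((0::nat,GA,True), \<alpha>),((1,GA,False), 1/2-\<alpha>),((0,GB,True), 1/2)]"
  define D where "D = pmf_of_list xs"
  define Q :: "example pmf" where "Q = return_pmf (1,GA,True)"
  define hstar :: hyp where "hstar = (\<lambda>x z. return_pmf (x = 0))"
  define M where "M = mix_pmf \<alpha> D Q"
  have wf: "pmf_of_list_wf xs" using a0 a1 unfolding xs_def by (intro pmf_of_list_wfI) auto
  have fS: "finite S" unfolding S_def by simp
  have DS: "set_pmf D \<subseteq> S" using set_pmf_of_list[OF wf] unfolding D_def xs_def S_def by auto
  have pD: "pmf D (0,GA,True) = \<alpha>" "pmf D (1,GA,False) = 1/2-\<alpha>" "pmf D (0,GB,True) = 1/2"
     "pmf D (1,GA,True) = 0"
    unfolding D_def by (simp_all only: pmf_pmf_of_list[OF wf]) (simp_all add: xs_def)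
  have pQ: "pmf Q (0,GA,True) = 0" "pmf Q (1,GA,False) = 0" "pmf Q (0,GB,True) = 0"
     "pmf Q (1,GA,True) = 1"
    unfolding Q_def by (simp_all add: pmf_return)
  have pD1: "pmf D (Suc 0,GA,False) = 1/2-\<alpha>" "pmf D (Suc 0,GA,True) = 0"
    using pD by simp_all
  have pQ1: "pmf Q (Suc 0,GA,False) = 0" "pmf Q (Suc 0,GA,True) = 1"
    using pQ by simp_all
  have pM: "pmf M x = (1 - \<alpha>) * pmf D x + \<alpha> * pmf Q x" for x
    unfolding M_def using a0 a1 by (intro pmf_mix) auto
  have MS: "set_pmf M \<subseteq> S"
  proof
    fix x assume "x \<in> set_pmf M"
    then have "pmf M x \<noteq> 0" by (simp add: set_pmf_iff)
    moreover have "x \<notin> S \<Longrightarrow> pmf D x = 0" using DS by (auto simp: set_pmf_iff)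
    moreover have "x \<notin> S \<Longrightarrow> pmf Q x = 0" unfolding Q_def S_def by (auto simp: pmf_return)
    ultimately show "x \<in> S" by (cases "x \<in> S") (auto simp: pM)
  qed
  have S4: "(\<Sum>a\<in>S. f a) = f (0,GA,True) + f (1,GA,False) + f (0,GB,True) + f (1,GA,True)" for f :: "example \<Rightarrow> real"
    unfolding S_def by simp
  have probD: "measure_pmf.prob D {(x, z, y). z = g \<and> y} = (if g = GA then \<alpha> else 1/2)" for g
    by (cases g) (simp_all add: prob_fin[OF fS DS] S4 pD pD1)
  have probM: "measure_pmf.prob M {(x, z, y). z = GA \<and> y} = (1-\<alpha>)*\<alpha> + \<alpha>"
    by (simp add: prob_fin[OF fS MS] S4 pM pD pQ pD1 pQ1)
  have probMB: "measure_pmf.prob M {(x, z, y). z = GB \<and> y} = (1-\<alpha>)/2"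
    by (simp add: prob_fin[OF fS MS] S4 pM pD pQ pD1 pQ1)
  show "\<exists>D H hstar Q.
       (\<forall>g. 0 < measure_pmf.prob D {(x, z, y). z = g \<and> y}) \<and>
       hstar \<in> H \<and> equal_opportunity D hstar \<and>
       (\<forall>h\<in>H. equal_opportunity D h \<longrightarrow> err D hstar \<le> err D h) \<and>
       (\<forall>hhat. equal_opportunity (mix_pmf \<alpha> D Q) hhat \<longrightarrow> 1/4 * sqrt \<alpha> \<le> \<bar>err D hhat - err D hstar\<bar>)"
  proof (rule exI[of _ D], rule exI[of _ "{hstar}"], rule exI[of _ hstar], rule exI[of _ Q], intro conjI allI ballI impI)
    fix g show "0 < measure_pmf.prob D {(x, z, y). z = g \<and> y}" using a0 by (simp add: probD)
  next
    show "hstar \<in> {hstar}" by simp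
  next
    show "equal_opportunity D hstar"
      unfolding equal_opportunity_def tpr_def using a0
      by (simp add: exp_fin[OF fS DS] S4 pD pD1 probD hstar_def)
  next
    fix h assume "h \<in> {hstar}" then show "err D hstar \<le> err D h" by simp
  next
    fix hhat :: hyp
    assume eo: "equal_opportunity (mix_pmf \<alpha> D Q) hhat"
    define u where "u = measure_pmf.prob (hhat 0 GA) {True}"
    define v where "v = measure_pmf.prob (hhat 1 GA) {True}"
    define w where "w = measure_pmf.prob (hhat 0 GB) {True}"
    have u01: "0 \<le> u" "u \<le> 1" and v01: "0 \<le> v" "v \<le> 1" and w01: "0 \<le> w" "w \<le> 1"
      unfolding u_def v_def w_def by simp_all
    have errs: "err D hstar = 0"
      unfolding err_def by (simp add: exp_fin[OF fS DS] S4 pD pD1 hstar_def)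
    have errh: "err D hhat = \<alpha> * (1 - u) + (1/2 - \<alpha>) * v + 1/2 * (1 - w)"
      unfolding err_def by (simp add: exp_fin[OF fS DS] S4 pD pD1 prob_notTrue prob_notFalse prob_False u_def v_def w_def)
    have tA: "tpr M hhat GA = ((1-\<alpha>) * \<alpha> * u + \<alpha> * v) / ((1-\<alpha>)*\<alpha> + \<alpha>)"
      unfolding tpr_def by (simp add: exp_fin[OF fS MS] S4 pM pD pQ pD1 pQ1 probM u_def v_def algebra_simps)
    have tB: "tpr M hhat GB = w"
      unfolding tpr_def using a0 a1 by (simp add: exp_fin[OF fS MS] S4 pM pD pQ pD1 pQ1 probMB w_def)
    have weq: "w = ((1-\<alpha>) * \<alpha> * u + \<alpha> * v) / ((1-\<alpha>)*\<alpha> + \<alpha>)"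
      using eo tA tB unfolding equal_opportunity_def M_def by simp
    have dpos: "(1-\<alpha>)*\<alpha> + \<alpha> > 0" using a0 a1 by (simp add: add_pos_nonneg)
    have w2: "w * ((1-\<alpha>)*\<alpha> + \<alpha>) = (1-\<alpha>) * \<alpha> * u + \<alpha> * v" using weq dpos by simp
    have w3: "w * (2 - \<alpha>) = (1-\<alpha>)*u + v"
    proof -
      have "\<alpha> * (w * (2 - \<alpha>)) = \<alpha> * ((1-\<alpha>)*u + v)" using w2 by (simp add: algebra_simps)
      then show ?thesis using a0 by simp
    qed
    have w4: "(1 - w) * (2 - \<alpha>) \<ge> 1 - v"
    proof -
      have "(1 - w) * (2 - \<alpha>) = (1-\<alpha>)*(1-u) + (1 - v)" using w3 by (simp add: algebra_simps)
      moreover have "(1-\<alpha>)*(1-u) \<ge> 0" using a1 u01 by simp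
      ultimately show ?thesis by simp
    qed
    have w5: "(1 - w) * 2 \<ge> 1 - v"
    proof -
      have "(1 - w) * (2 - \<alpha>) \<le> (1 - w) * 2" using w01 a0 by (intro mult_left_mono) auto
      then show ?thesis using w4 by simp
    qed
    have e: "err D hhat \<ge> 1/4"
    proof -
      have "\<alpha> * (1 - u) \<ge> 0" using a0 u01 by simp
      moreover have "(1/2 - \<alpha>) * v \<ge> 1/4 * v" using a1 v01 by (intro mult_right_mono) auto
      ultimately show ?thesis using errh w5 by linarith
    qed
    have "sqrt \<alpha> \<le> sqrt (1/4)" using a1 by (rule real_sqrt_le_mono)
    moreover have "sqrt (1/4::real) = 1/2" by (simp add: real_sqrt_divide)
    ultimately have "1/4 * sqrt \<alpha> \<le> 1/8" by simp
    then show "1/4 * sqrt \<alpha> \<le> \<bar>err D hhat - err D hstar\<bar>" using e errs by simp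
  qed
qed simp_all

end
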